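(* Let $\mathcal P$ be a finite subset of $\mathcal W$ and let $P(1),P(2),P(3),\ldots$ be a sequence of matrices from $\mathcal P$. Suppose $j_1<j_2<\cdots$ is an infinite increasing sequence of indices such that each $P(j_r)$ is a Sarymsakov matrix. If there exists an integer $T$ such that $j_{r+1}-j_r\le T$ for all $r\ge1$, then $P(k)\cdots P(1)$ converges as $k\to\infty$ to a rank-one matrix $\mathbf 1c^T$ with $c_i\ge0$ and $\sum_i c_i=1$.
   Context: Let $\mathcal N=\{1,\ldots,n\}$; all matrices are $n\times n$. A matrix is stochastic if it is entrywise nonnegative with row sums $1$. For stochastic $P$ and $\mathcal A\subseteq\mathcal N$, $F_P(\mathcal A)=\{j:\ p_{ij}>0\text{ for some } i\in\mathcal A\}$. A Sarymsakov matrix is a stochastic $P$ such that for any disjoint nonempty $\mathcal A,\tilde{\mathcal A}\subseteq\mathcal N$, either $F_P(\mathcal A)\cap F_P(\tilde{\mathcal A})\neq\emptyset$, or $F_P(\mathcal A)\cap F_P(\tilde{\mathcal A})=\emptyset$ and $|F_P(\mathcal A)\cup F_P(\tilde{\mathcal A})|>|\mathcal A\cup\tilde{\mathcal A}|$. $\mathcal W$ is the set of stochastic $P$ such that for any disjoint nonempty $\mathcal A,\tilde{\mathcal A}\subseteq\mathcal N$, either $F_P(\mathcal A)\cap F_P(\tilde{\mathcal A})\neq\emptyset$, or $F_P(\mathcal A)\cap F_P(\tilde{\mathcal A})=\emptyset$ and $|F_P(\mathcal A)\cup F_P(\tilde{\mathcal A})|\ge|\mathcal A\cup\tilde{\mathcal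 A}|$. $\mathbf 1$ is the all-ones column vector. *)

theory Defs
  imports "HOL-Analysis.Analysis"
begin

definition stochastic :: "real^'n^'n \<Rightarrow> bool" where
  "stochastic P \<longleftrightarrow> (\<forall>i j. P $ i $ j \<ge> 0) \<and> (\<forall>i. (\<Sum>j\<in>UNIV. P $ i $ j) = 1)"

definition succ_set :: "real^'n^'n \<Rightarrow> 'n set \<Rightarrow> 'n set" where
  "succ_set P A = {j. \<exists>i\<in>A. P $ i $ j > 0}"

definition sarymsakov :: "real^'n^'n \<Rightarrow> bool" where
  "sarymsakov P \<longleftrightarrow> stochastic P \<and>
     (\<forall>A B. A \<noteq> {} \<and> B \<noteq> {} \<and> A \<inter> B = {} \<longrightarrow>
        succ_set P A \<inter> succ_set P B \<noteq> {} \<or>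
        (succ_set P A \<inter> succ_set P B = {} \<and>
         card (succ_set P A \<union> succ_set P B) > card (A \<union> B)))"

definition classW :: "(real^'n^'n) set" where
  "classW = {P. stochastic P \<and>
     (\<forall>A B. A \<noteq> {} \<and> B \<noteq> {} \<and> A \<inter> B = {} \<longrightarrow>
        succ_set P A \<inter> succ_set P B \<noteq> {} \<or>
        (succ_set P A \<inter> succ_set P B = {} \<and>
         card (succ_set P A \<union> succ_set P B) \<ge> card (A \<union> B)))}"

fun lprod :: "(nat \<Rightarrow> real^'n^'n) \<Rightarrow> nat \<Rightarrow> real^'n^'n" where
  "lprod P 0 = mat 1"
| "lprod P (Suc k) = P (Suc k) ** lprod P k"

end

theory Submission
  imports Defs
begin


lemma mult_entry: "(X ** Y) $ i $ k = (\<Sum>m\<in>UNIV. X $ i $ m * Y $ m $ k)"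
  by (simp add: matrix_matrix_mult_def)

lemma mat1_entry: "(mat 1 :: real^'n^'n) $ i $ k = (if i = k then 1 else 0)"
  by (simp add: mat_def)

lemma stochastic_mat1: "stochastic (mat 1 :: real^'n^'n)"
  unfolding stochastic_def by (simp add: mat1_entry)

lemma stochastic_mult:
  assumes "stochastic X" "stochastic Y"
  shows "stochastic (X ** Y)"
proof -
  have nn: "\<forall>i k. 0 \<le> (X ** Y) $ i $ k"
    using assms by (auto simp: stochastic_def mult_entry intro!: sum_nonneg)
  have "(\<Sum>k\<in>UNIV. (X ** Y) $ i $ k) = 1" for i
  proof -
    have "(\<Sum>k\<in>UNIV. (X ** Y) $ i $ k) = (\<Sum>m\<in>UNIV. \<Sum>k\<in>UNIV. X $ i $ m * Y $ m $ k)"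
      unfolding mult_entry by (rule sum.swap)
    also have "\<dots> = (\<Sum>m\<in>UNIV. X $ i $ m * (\<Sum>k\<in>UNIV. Y $ m $ k))"
      by (simp add: sum_distrib_left)
    also have "\<dots> = 1" using assms by (simp add: stochastic_def)
    finally show ?thesis .
  qed
  thus ?thesis using nn unfolding stochastic_def by blast
qed

lemma sum_pos_ex:
  fixes f :: "'a \<Rightarrow> real"
  assumes "finite A" "0 < sum f A"
  shows "\<exists>x\<in>A. 0 < f x"
  using assms sum_nonpos[of A f] by (meson not_le)

lemma succ_mult:
  assumes "stochastic X" "stochastic Y"
  shows "succ_set (X ** Y) A = succ_set Y (succ_set X A)"
proof -
  have "0 < (X ** Y) $ i $ k \<longleftrightarrow> (\<exists>m. 0 < X $ i $ m \<and> 0 < Y $ m $ k)" for i k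
  proof
    assume "0 < (X ** Y) $ i $ k"
    then obtain m where "0 < X $ i $ m * Y $ m $ k"
      using sum_pos_ex[of UNIV "\<lambda>m. X $ i $ m * Y $ m $ k"] by (auto simp: mult_entry)
    moreover have "0 \<le> X $ i $ m" "0 \<le> Y $ m $ k" using assms by (auto simp: stochastic_def)
    ultimately show "\<exists>m. 0 < X $ i $ m \<and> 0 < Y $ m $ k"
      by (metis less_eq_real_def mult_zero_left mult_zero_right)
  next
    assume "\<exists>m. 0 < X $ i $ m \<and> 0 < Y $ m $ k"
    then obtain m where m: "0 < X $ i $ m" "0 < Y $ m $ k" by blast
    have "X $ i $ m * Y $ m $ k \<le> (\<Sum>m\<in>UNIV. X $ i $ m * Y $ m $ k)"
      using assms by (intro member_le_sum) (auto simp: stochastic_def)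
    thus "0 < (X ** Y) $ i $ k" using m by (simp add: mult_entry) (smt (verit) mult_pos_pos)
  qed
  thus ?thesis by (auto simp: succ_set_def)
qed

lemma stochastic_row_pos:
  assumes "stochastic X"
  shows "\<exists>k. 0 < X $ i $ k"
proof -
  have "(\<Sum>k\<in>UNIV. X $ i $ k) = 1" using assms by (simp add: stochastic_def)
  thus ?thesis using sum_pos_ex[of UNIV "\<lambda>k. X $ i $ k"] by auto
qed

lemma succ_nonempty:
  assumes "stochastic X" "A \<noteq> {}"
  shows "succ_set X A \<noteq> {}"
  using assms stochastic_row_pos[OF assms(1)] by (auto simp: succ_set_def)

lemma succ_mono: "A \<subseteq> B \<Longrightarrow> succ_set X A \<subseteq> succ_set X B"
  by (auto simp: succ_set_def)

definition growG :: "real^'n^'n \<Rightarrow> nat \<Rightarrow> bool" where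
  "growG X t \<longleftrightarrow> stochastic X \<and> (\<forall>A B. A \<noteq> {} \<and> B \<noteq> {} \<and> A \<inter> B = {} \<and>
     succ_set X A \<inter> succ_set X B = {} \<longrightarrow> card (A \<union> B) + t \<le> card (succ_set X A \<union> succ_set X B))"

lemma growG_W: "X \<in> classW \<Longrightarrow> growG X 0"
  unfolding growG_def classW_def by auto

lemma growG_S: "sarymsakov X \<Longrightarrow> growG X 1"
  unfolding growG_def sarymsakov_def by (metis Suc_eq_plus1 Suc_leI)

lemma growG_mat1: "growG (mat 1 :: real^'n^'n) 0"
proof -
  have "succ_set (mat 1 :: real^'n^'n) A = A" for A
    by (auto simp: succ_set_def mat1_entry)
  thus ?thesis by (simp add: growG_def stochastic_mat1)
qed

lemma growG_mult:
  assumes "growG X s" "growG Y t"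
  shows "growG (X ** Y) (s + t)"
  unfolding growG_def
proof (intro conjI allI impI)
  have sX: "stochastic X" and sY: "stochastic Y" using assms by (auto simp: growG_def)
  show "stochastic (X ** Y)" by (rule stochastic_mult[OF sX sY])
  fix A B :: "'a set"
  assume h: "A \<noteq> {} \<and> B \<noteq> {} \<and> A \<inter> B = {} \<and> succ_set (X ** Y) A \<inter> succ_set (X ** Y) B = {}"
  let ?A = "succ_set X A" and ?B = "succ_set X B"
  have e: "succ_set Y ?A \<inter> succ_set Y ?B = {}" using h by (simp add: succ_mult[OF sX sY])
  have ne: "?A \<noteq> {}" "?B \<noteq> {}" using h succ_nonempty[OF sX] by auto
  have d: "?A \<inter> ?B = {}"
  proof (rule ccontr)
    assume "?A \<inter> ?B \<noteq> {}"
    then obtain k where k: "k \<in> ?A" "k \<in> ?B" by blast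
    have "succ_set Y {k} \<noteq> {}" using succ_nonempty[OF sY] by auto
    moreover have "succ_set Y {k} \<subseteq> succ_set Y ?A" "succ_set Y {k} \<subseteq> succ_set Y ?B"
      using k by (auto intro!: succ_mono)
    ultimately show False using e by blast
  qed
  have "card (A \<union> B) + s \<le> card (?A \<union> ?B)" using assms(1) h d unfolding growG_def by blast
  moreover have "card (?A \<union> ?B) + t \<le> card (succ_set Y ?A \<union> succ_set Y ?B)"
    using assms(2) ne d e unfolding growG_def by blast
  ultimately show "card (A \<union> B) + (s + t) \<le> card (succ_set (X ** Y) A \<union> succ_set (X ** Y) B)"
    by (simp add: succ_mult[OF sX sY])
qed

lemma growG_scramble:
  assumes "growG (X :: real^'n^'n) t" "CARD('n) \<le> t"
  shows "\<exists>k. 0 < X $ i $ k \<and> 0 < X $ i' $ k"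
proof (cases "i = i'")
  case True
  thus ?thesis using stochastic_row_pos assms(1) by (auto simp: growG_def)
next
  case False
  show ?thesis
  proof (rule ccontr)
    assume nk: "\<not> ?thesis"
    have "succ_set X {i} \<inter> succ_set X {i'} = {}" using nk by (auto simp: succ_set_def)
    hence "card ({i} \<union> {i'}) + t \<le> card (succ_set X {i} \<union> succ_set X {i'})"
    proof -
      have "{i} \<noteq> {} \<and> {i'} \<noteq> {} \<and> {i} \<inter> {i'} = {} \<and> succ_set X {i} \<inter> succ_set X {i'} = {}"
        using False \<open>succ_set X {i} \<inter> succ_set X {i'} = {}\<close> by auto
      thus ?thesis using assms(1) unfolding growG_def by blast
    qed
    hence "2 + t \<le> card (succ_set X {i} \<union> succ_set X {i'})" using False by simp
    moreover have "card (succ_set X {i} \<union> succ_set X {i'}) \<le> CARD('n)"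
      by (rule card_mono) auto
    ultimately show False using False assms(2) by simp
  qed
qed



fun seg :: "(nat \<Rightarrow> real^'n^'n) \<Rightarrow> nat \<Rightarrow> nat \<Rightarrow> real^'n^'n" where
  "seg P a 0 = mat 1"
| "seg P a (Suc d) = P (Suc (a + d)) ** seg P a d"

lemma lprod_seg: "lprod P (a + d) = seg P a d ** lprod P a"
  by (induction d) (auto simp: matrix_mul_assoc)

lemma seg_add: "seg P a (d1 + d2) = seg P (a + d1) d2 ** seg P a d1"
  by (induction d2) (auto simp: matrix_mul_assoc add_ac)

lemma seg_stoch:
  assumes "\<forall>k\<ge>1. stochastic (P k)"
  shows "stochastic (seg P a d)"
  by (induction d) (auto simp: stochastic_mat1 assms intro!: stochastic_mult)

lemma lprod_stoch:
  assumes "\<forall>k\<ge>1. stochastic (P k)"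
  shows "stochastic (lprod P k)"
  by (induction k) (auto simp: stochastic_mat1 assms intro!: stochastic_mult)

lemma seg_growW:
  assumes "\<forall>k\<ge>1. P k \<in> classW"
  shows "growG (seg P a d) 0"
  by (induction d) (auto simp: growG_mat1 assms growG_W
      intro!: growG_mult[where s=0 and t=0, simplified])

lemma seg_growS:
  assumes "\<forall>k\<ge>1. P k \<in> classW" "sarymsakov (P (Suc a))" "d \<ge> 1"
  shows "growG (seg P a d) 1"
  using assms(3)
proof (induction d)
  case 0 thus ?case by simp
next
  case (Suc d)
  show ?case
  proof (cases "d = 0")
    case True
    thus ?thesis using growG_S[OF assms(2)] by simp
  next
    case False
    hence "growG (seg P a d) 1" using Suc by simp
    moreover have "growG (P (Suc (a + d))) 0" using assms(1) growG_W by auto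
    ultimately show ?thesis using growG_mult[of "P (Suc (a + d))" 0 "seg P a d" 1] by simp
  qed
qed

lemma block_grow:
  assumes "\<forall>k\<ge>1. P k \<in> classW" "strict_mono j" "j 0 \<ge> 1"
    and "\<forall>r. sarymsakov (P (j r))"
  shows "growG (seg P (j r - 1) (j (r + m) - j r)) m"
proof (induction m)
  case 0 thus ?case by (simp add: growG_mat1)
next
  case (Suc m)
  have j1: "j q \<ge> 1" for q using assms(2,3) strict_mono_less_eq[OF assms(2), of 0 q] by simp
  have m1: "j r \<le> j (r + m)" "j (r + m) < j (r + Suc m)"
    using strict_mono_less_eq[OF assms(2)] strict_monoD[OF assms(2)] by auto
  have e1: "j (r + Suc m) - j r = (j (r + m) - j r) + (j (r + Suc m) - j (r + m))"
    using m1 by simp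
  have e2: "j r - 1 + (j (r + m) - j r) = j (r + m) - 1" using m1 j1[of r] by simp
  have g: "growG (seg P (j (r + m) - 1) (j (r + Suc m) - j (r + m))) 1"
    apply (rule seg_growS[OF assms(1)])
    using assms(4) j1[of "r+m"] m1 by auto
  show ?case unfolding e1 seg_add e2
    using growG_mult[OF g Suc.IH] by simp
qed

lemma gap_bound:
  assumes "strict_mono j" "\<forall>r. j (Suc r) - j r \<le> T"
  shows "j (r + m) - j r \<le> m * T"
proof (induction m)
  case 0 thus ?case by simp
next
  case (Suc m)
  have m1: "j r \<le> j (r + m)" "j (r + m) < j (r + Suc m)"
    using strict_mono_less_eq[OF assms(1)] strict_monoD[OF assms(1)] by auto
  have "j (r + Suc m) - j (r + m) \<le> T" using assms(2) by (metis add_Suc_right)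
  thus ?case using Suc m1 by simp
qed

lemma seg_pos_bound:
  assumes "\<forall>k\<ge>1. P k \<in> \<P>" "\<forall>k\<ge>1. stochastic (P k)"
    and "\<forall>Q\<in>\<P>. \<forall>i j. 0 < Q $ i $ j \<longrightarrow> \<mu> \<le> Q $ i $ j" and "0 < \<mu>"
  shows "0 < seg P a d $ i $ k \<Longrightarrow> \<mu> ^ d \<le> seg P a d $ i $ k"
proof (induction d arbitrary: i k)
  case 0 thus ?case by (simp add: mat1_entry split: if_splits)
next
  case (Suc d)
  let ?Q = "P (Suc (a + d))" and ?S = "seg P a d"
  have sQ: "stochastic ?Q" using assms(2) by auto
  have sS: "stochastic ?S" using seg_stoch[OF assms(2)] .
  obtain m where m: "0 < ?Q $ i $ m * ?S $ m $ k"
    using Suc.prems sum_pos_ex[of UNIV "\<lambda>m. ?Q $ i $ m * ?S $ m $ k"] by (auto simp: mult_entry)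
  have nn: "0 \<le> ?Q $ i $ m" "0 \<le> ?S $ m $ k" using sQ sS by (auto simp: stochastic_def)
  have p: "0 < ?Q $ i $ m" "0 < ?S $ m $ k" using m nn
    by (metis less_eq_real_def mult_zero_left mult_zero_right)+
  have "\<mu> \<le> ?Q $ i $ m" using assms(1,3) p(1) by auto
  moreover have "\<mu> ^ d \<le> ?S $ m $ k" using Suc.IH p(2) .
  ultimately have "\<mu> * \<mu> ^ d \<le> ?Q $ i $ m * ?S $ m $ k"
    using assms(4) by (intro mult_mono) auto
  also have "\<dots> \<le> (\<Sum>m\<in>UNIV. ?Q $ i $ m * ?S $ m $ k)"
    using sQ sS by (intro member_le_sum) (auto simp: stochastic_def)
  finally show ?case by (simp add: mult_entry)
qed



lemma stoch_avg_bounds: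
  assumes "stochastic X" "\<forall>m. lo \<le> y m \<and> y m \<le> hi"
  shows "lo \<le> (\<Sum>m\<in>UNIV. X $ i $ m * y m) \<and> (\<Sum>m\<in>UNIV. X $ i $ m * y m) \<le> hi"
proof -
  have nn: "0 \<le> X $ i $ m" for m using assms(1) by (simp add: stochastic_def)
  have s1: "(\<Sum>m\<in>UNIV. X $ i $ m) = 1" using assms(1) by (simp add: stochastic_def)
  have "(\<Sum>m\<in>UNIV. X $ i $ m * y m) \<le> (\<Sum>m\<in>UNIV. X $ i $ m * hi)"
    using nn assms(2) by (intro sum_mono mult_left_mono) auto
  also have "\<dots> = hi" using s1 by (simp add: sum_distrib_right[symmetric])
  finally have u: "(\<Sum>m\<in>UNIV. X $ i $ m * y m) \<le> hi" .
  have "lo = (\<Sum>m\<in>UNIV. X $ i $ m * lo)" using s1 by (simp add: sum_distrib_right[symmetric])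
  also have "\<dots> \<le> (\<Sum>m\<in>UNIV. X $ i $ m * y m)"
    using nn assms(2) by (intro sum_mono mult_left_mono) auto
  finally show ?thesis using u by simp
qed

lemma stoch_contract:
  assumes "stochastic X" "\<forall>m. lo \<le> y m \<and> y m \<le> hi"
    and "\<eta> \<le> X $ i $ k" "\<eta> \<le> X $ i' $ k"
  shows "(\<Sum>m\<in>UNIV. X $ i $ m * y m) - (\<Sum>m\<in>UNIV. X $ i' $ m * y m) \<le> (1 - \<eta>) * (hi - lo)"
proof -
  have nn: "0 \<le> X $ p $ m" for p m using assms(1) by (simp add: stochastic_def)
  have s1: "(\<Sum>m\<in>UNIV. X $ p $ m) = 1" for p using assms(1) by (simp add: stochastic_def)
  have a: "(\<Sum>m\<in>UNIV. X $ i $ m * y m) = hi - (\<Sum>m\<in>UNIV. X $ i $ m * (hi - y m))"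
    by (simp add: right_diff_distrib sum_subtractf sum_distrib_right[symmetric] s1)
  have a2: "X $ i $ k * (hi - y k) \<le> (\<Sum>m\<in>UNIV. X $ i $ m * (hi - y m))"
    using nn assms(2) by (intro member_le_sum) auto
  have a3: "\<eta> * (hi - y k) \<le> X $ i $ k * (hi - y k)"
    using assms(2,3) by (intro mult_right_mono) auto
  have b: "(\<Sum>m\<in>UNIV. X $ i' $ m * y m) = lo + (\<Sum>m\<in>UNIV. X $ i' $ m * (y m - lo))"
    by (simp add: right_diff_distrib sum_subtractf sum_distrib_right[symmetric] s1)
  have b2: "X $ i' $ k * (y k - lo) \<le> (\<Sum>m\<in>UNIV. X $ i' $ m * (y m - lo))"
    using nn assms(2) by (intro member_le_sum) auto
  have b3: "\<eta> * (y k - lo) \<le> X $ i' $ k * (y k - lo)"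
    using assms(2,4) by (intro mult_right_mono) auto
  have "(\<Sum>m\<in>UNIV. X $ i $ m * y m) - (\<Sum>m\<in>UNIV. X $ i' $ m * y m)
      \<le> (hi - \<eta> * (hi - y k)) - (lo + \<eta> * (y k - lo))"
    using a a2 a3 b b2 b3 by linarith
  also have "\<dots> = (1 - \<eta>) * (hi - lo)" by (simp add: algebra_simps)
  finally show ?thesis .
qed

definition mx :: "('n::finite \<Rightarrow> real) \<Rightarrow> real" where "mx y = Max (range y)"
definition mn :: "('n::finite \<Rightarrow> real) \<Rightarrow> real" where "mn y = Min (range y)"

lemma mx_ge: "y i \<le> mx y" unfolding mx_def by (rule Max_ge) auto
lemma mn_le: "mn y \<le> y i" unfolding mn_def by (rule Min_le) auto
lemma mx_in: "\<exists>i. mx y = y i"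
proof -
  have "Max (range y) \<in> range y" by (rule Max_in) auto
  thus ?thesis unfolding mx_def by blast
qed

lemma mn_in: "\<exists>i. mn y = y i"
proof -
  have "Min (range y) \<in> range y" by (rule Min_in) auto
  thus ?thesis unfolding mn_def by blast
qed

lemma mx_step:
  assumes "stochastic X"
  shows "mx (\<lambda>i. \<Sum>m\<in>UNIV. X $ i $ m * y m) \<le> mx y \<and> mn y \<le> mn (\<lambda>i. \<Sum>m\<in>UNIV. X $ i $ m * y m)"
proof -
  have b: "\<forall>m. mn y \<le> y m \<and> y m \<le> mx y" using mx_ge mn_le by blast
  obtain i where i: "mx (\<lambda>i. \<Sum>m\<in>UNIV. X $ i $ m * y m) = (\<Sum>m\<in>UNIV. X $ i $ m * y m)"
    using mx_in by blast
  obtain i' where i': "mn (\<lambda>i. \<Sum>m\<in>UNIV. X $ i $ m * y m) = (\<Sum>m\<in>UNIV. X $ i' $ m * y m)"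
    using mn_in by blast
  show ?thesis using stoch_avg_bounds[OF assms b, of i] stoch_avg_bounds[OF assms b, of i'] i i'
    by simp
qed

lemma osc_contract:
  assumes "stochastic X" "\<forall>i i'. \<exists>k. \<eta> \<le> X $ i $ k \<and> \<eta> \<le> X $ i' $ k"
  shows "mx (\<lambda>i. \<Sum>m\<in>UNIV. X $ i $ m * y m) - mn (\<lambda>i. \<Sum>m\<in>UNIV. X $ i $ m * y m)
     \<le> (1 - \<eta>) * (mx y - mn y)"
proof -
  have b: "\<forall>m. mn y \<le> y m \<and> y m \<le> mx y" using mx_ge mn_le by blast
  obtain i where i: "mx (\<lambda>i. \<Sum>m\<in>UNIV. X $ i $ m * y m) = (\<Sum>m\<in>UNIV. X $ i $ m * y m)"
    using mx_in by blast
  obtain i' where i': "mn (\<lambda>i. \<Sum>m\<in>UNIV. X $ i $ m * y m) = (\<Sum>m\<in>UNIV. X $ i' $ m * y m)"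
    using mn_in by blast
  obtain k where "\<eta> \<le> X $ i $ k" "\<eta> \<le> X $ i' $ k" using assms(2) by blast
  from stoch_contract[OF assms(1) b this] show ?thesis using i i' by simp
qed



theorem corollary1:
  fixes \<P> :: "(real^'n^'n) set" and P :: "nat \<Rightarrow> real^'n^'n"
    and j :: "nat \<Rightarrow> nat" and T :: nat
  assumes "finite \<P>" and "\<P> \<subseteq> classW"
    and "\<forall>k\<ge>1. P k \<in> \<P>"
    and "strict_mono j" and "j 0 \<ge> 1"
    and "\<forall>r. sarymsakov (P (j r))"
    and "\<forall>r. j (Suc r) - j r \<le> T"
  shows "\<exists>c :: real^'n. (\<forall>i. c $ i \<ge> 0) \<and> (\<Sum>i\<in>UNIV. c $ i) = 1 \<and>
           (lprod P \<longlonglongrightarrow> (\<chi> i k. c $ k))"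
proof -
  have W: "\<forall>k\<ge>1. P k \<in> classW" using assms(2,3) by auto
  have stP: "\<forall>k\<ge>1. stochastic (P k)" using W by (auto simp: classW_def)
  define N where "N = CARD('n)"
  define S where "S = {Q $ i $ k | Q i k. Q \<in> \<P> \<and> 0 < Q $ i $ k}"
  have finS: "finite S"
  proof -
    have "S \<subseteq> (\<lambda>(Q, i, k). Q $ i $ k) ` (\<P> \<times> UNIV \<times> (UNIV :: 'n set))"
    proof
      fix z assume "z \<in> S"
      then obtain Q i k where "z = Q $ i $ k" "Q \<in> \<P>" unfolding S_def by blast
      thus "z \<in> (\<lambda>(Q, i, k). Q $ i $ k) ` (\<P> \<times> UNIV \<times> (UNIV :: 'n set))"
        by (intro image_eqI[of _ _ "(Q, i, k)"]) auto
    qed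
    moreover have "finite ((\<lambda>(Q, i, k). Q $ i $ k) ` (\<P> \<times> UNIV \<times> (UNIV :: 'n set)))"
      using assms(1) by auto
    ultimately show ?thesis by (rule finite_subset)
  qed
  define \<mu> where "\<mu> = Min (insert 1 S)"
  have mu_pos: "0 < \<mu>" unfolding \<mu>_def using finS by (auto simp: S_def)
  have mu_le1: "\<mu> \<le> 1" unfolding \<mu>_def using finS by auto
  have hmu: "\<forall>Q\<in>\<P>. \<forall>i k. 0 < Q $ i $ k \<longrightarrow> \<mu> \<le> Q $ i $ k"
    unfolding \<mu>_def using finS by (auto simp: S_def intro!: Min_le)
  define \<eta> where "\<eta> = \<mu> ^ (N * T)"
  have eta_pos: "0 < \<eta>" unfolding \<eta>_def using mu_pos by simp
  have eta_le1: "\<eta> \<le> 1" unfolding \<eta>_def using mu_pos mu_le1 by (simp add: power_le_one)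
  define a where "a s = j (s * N) - 1" for s
  define d where "d s = j (Suc s * N) - j (s * N)" for s
  have j1: "j q \<ge> 1" for q using assms(4,5) strict_mono_less_eq[OF assms(4), of 0 q] by simp
  have jm: "j (s * N) \<le> j (Suc s * N)" for s using strict_mono_less_eq[OF assms(4)] by simp
  have a_suc: "a (Suc s) = a s + d s" for s unfolding a_def d_def using jm[of s] j1[of "s * N"] by simp
  have scr: "\<forall>i i'. \<exists>k. \<eta> \<le> seg P (a s) (d s) $ i $ k \<and> \<eta> \<le> seg P (a s) (d s) $ i' $ k" for s
  proof (intro allI)
    fix i i'
    have eqn: "Suc s * N = s * N + N" by simp
    have g: "growG (seg P (a s) (d s)) N"
      unfolding a_def d_def eqn using block_grow[OF W assms(4,5,6)] by blast
    obtain k where k: "0 < seg P (a s) (d s) $ i $ k" "0 < seg P (a s) (d s) $ i' $ k"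
      using growG_scramble[OF g] N_def by auto
    have dl: "d s \<le> N * T" unfolding d_def eqn using gap_bound[OF assms(4,7)] by blast
    have "\<eta> \<le> \<mu> ^ d s" unfolding \<eta>_def using dl mu_pos mu_le1 by (intro power_decreasing) auto
    thus "\<exists>k. \<eta> \<le> seg P (a s) (d s) $ i $ k \<and> \<eta> \<le> seg P (a s) (d s) $ i' $ k"
      using seg_pos_bound[OF assms(3) stP hmu mu_pos, of "a s" "d s"] k order_trans by blast
  qed
  have colkey: "\<exists>c. \<forall>i. (\<lambda>k. lprod P k $ i $ l) \<longlonglongrightarrow> c" for l
  proof -
    define x where "x k = (\<lambda>i. lprod P k $ i $ l)" for k
    define U where "U k = mx (x k)" for k
    define L where "L k = mn (x k)" for k
    have step: "x (Suc k) = (\<lambda>i. \<Sum>m\<in>UNIV. P (Suc k) $ i $ m * x k m)" for k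
      unfolding x_def by (simp add: mult_entry)
    have blk: "x (a (Suc s)) = (\<lambda>i. \<Sum>m\<in>UNIV. seg P (a s) (d s) $ i $ m * x (a s) m)" for s
      unfolding x_def a_suc lprod_seg by (simp add: mult_entry)
    have dec: "decseq U"
      by (rule decseq_SucI) (simp add: U_def step mx_step stP)
    have inc: "incseq L"
      by (rule incseq_SucI) (simp add: L_def step mx_step stP)
    have LU: "L k \<le> U k" for k
      using mn_le[of "x k" undefined] mx_ge[of "x k" undefined] unfolding L_def U_def by linarith
    have U0: "U 0 \<le> 1" unfolding U_def x_def
      using mx_in[of "\<lambda>i. lprod P 0 $ i $ l"] by (auto simp: mat1_entry)
    have L0: "0 \<le> L 0" unfolding L_def x_def
      using mn_in[of "\<lambda>i. lprod P 0 $ i $ l"] by (auto simp: mat1_entry)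
    have osc1: "U k - L k \<le> 1" for k
      using decseqD[OF dec, of 0 k] incseqD[OF inc, of 0 k] U0 L0 by simp
    have osc: "U (a s) - L (a s) \<le> (1 - \<eta>) ^ s" for s
    proof (induction s)
      case 0 thus ?case using osc1 by simp
    next
      case (Suc s)
      have "U (a (Suc s)) - L (a (Suc s)) \<le> (1 - \<eta>) * (U (a s) - L (a s))"
        unfolding U_def L_def blk
        by (rule osc_contract[OF seg_stoch[OF stP] scr])
      also have "\<dots> \<le> (1 - \<eta>) * (1 - \<eta>) ^ s"
        using Suc eta_le1 by (intro mult_left_mono) auto
      finally show ?case by simp
    qed
    have lb: "\<forall>k. L 0 \<le> U k"
    proof
      fix k show "L 0 \<le> U k" using incseqD[OF inc, of 0 k] LU[of k] by linarith
    qed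
    have ub: "\<forall>k. L k \<le> U 0"
    proof
      fix k show "L k \<le> U 0" using decseqD[OF dec, of 0 k] LU[of k] by linarith
    qed
    obtain u where u: "U \<longlonglongrightarrow> u" "\<forall>k. u \<le> U k"
      using decseq_convergent[OF dec lb] by blast
    obtain v where v: "L \<longlonglongrightarrow> v" "\<forall>k. L k \<le> v"
      using incseq_convergent[OF inc ub] by blast
    have vu: "v \<le> u" using LIMSEQ_le[OF v(1) u(1)] LU by auto
    have uv: "u \<le> v"
    proof (rule ccontr)
      assume "\<not> u \<le> v"
      hence "0 < u - v" by simp
      then obtain s where "(1 - \<eta>) ^ s < u - v" using real_arch_pow_inv[of "u - v" "1 - \<eta>"] eta_pos by auto
      moreover have "u - v \<le> U (a s) - L (a s)" using u(2)[rule_format, of "a s"] v(2)[rule_format, of "a s"] by linarith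
      ultimately show False using osc[of s] by simp
    qed
    have "(\<lambda>k. lprod P k $ i $ l) \<longlonglongrightarrow> u" for i
    proof (rule real_tendsto_sandwich[of L _ _ U])
      show "\<forall>\<^sub>F k in sequentially. L k \<le> lprod P k $ i $ l"
        unfolding L_def x_def by (intro always_eventually allI mn_le)
      show "\<forall>\<^sub>F k in sequentially. lprod P k $ i $ l \<le> U k"
        unfolding U_def x_def by (intro always_eventually allI mx_ge)
      show "L \<longlonglongrightarrow> u" using v(1) uv vu by simp
      show "U \<longlonglongrightarrow> u" using u(1) .
    qed
    thus ?thesis by blast
  qed
  then obtain cf where cf: "\<And>l i. (\<lambda>k. lprod P k $ i $ l) \<longlonglongrightarrow> cf l" by metis
  define c :: "real^'n" where "c = (\<chi> l. cf l)"
  have stL: "stochastic (lprod P k)" for k by (rule lprod_stoch[OF stP])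
  have cnn: "0 \<le> c $ l" for l
  proof -
    have "(\<lambda>k. lprod P k $ undefined $ l) \<longlonglongrightarrow> cf l" by (rule cf)
    moreover have "\<exists>N. \<forall>n\<ge>N. 0 \<le> lprod P n $ undefined $ l"
      using stL by (auto simp: stochastic_def)
    ultimately have "0 \<le> cf l" by (rule LIMSEQ_le_const)
    thus ?thesis unfolding c_def by simp
  qed
  have "(\<lambda>k. \<Sum>l\<in>UNIV. lprod P k $ undefined $ l) \<longlonglongrightarrow> (\<Sum>l\<in>UNIV. cf l)"
    by (intro tendsto_sum cf)
  moreover have "(\<lambda>k. \<Sum>l\<in>UNIV. lprod P k $ undefined $ l) = (\<lambda>k. 1)"
    using stL by (simp add: stochastic_def)
  ultimately have "(\<lambda>k. 1::real) \<longlonglongrightarrow> (\<Sum>l\<in>UNIV. cf l)" by simp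
  hence "(\<Sum>l\<in>UNIV. cf l) = 1" using LIMSEQ_unique[OF _ tendsto_const] by blast
  hence csum: "(\<Sum>l\<in>UNIV. c $ l) = 1" unfolding c_def by simp
  have lim: "lprod P \<longlonglongrightarrow> (\<chi> i k. c $ k)"
  proof (rule vec_tendstoI)
    fix i
    show "(\<lambda>x. lprod P x $ i) \<longlonglongrightarrow> (\<chi> i k. c $ k) $ i"
    proof (rule vec_tendstoI)
      fix l
      show "(\<lambda>x. lprod P x $ i $ l) \<longlonglongrightarrow> (\<chi> i k. c $ k) $ i $ l"
      proof -
        have "(\<lambda>k. lprod P k $ i $ l) \<longlonglongrightarrow> cf l" by (rule cf)
        thus ?thesis by (simp add: c_def)
      qed
    qed
  qed
  show ?thesis using cnn csum lim by blast
qed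


end
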